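(* Let $(X,d)$ be a complete separable metric space and let $f\colon X\to X$ be a continuous map. If $f$ is strongly mixing, then every uniformly Li-Yorke scrambled set of $f$ is of first category in $X$.
   Context: $f$ is strongly mixing if for all nonempty open $U,V\subset X$ there is $N\in\mathbb{N}$ such that $U\cap f^{-n}(V)\neq\emptyset$ for all $n\geq N$. A subset $S\subset X$ with at least two points is uniformly Li-Yorke scrambled for $f$ if there exist sequences $\{p_n\}$, $\{q_n\}$ in $\mathbb{N}$ such that for all distinct $x,y\in S$: $\lim_{n} d(f^{p_n}(x),f^{p_n}(y))=0$ and $\lim_{n} d(f^{q_n}(x),f^{q_n}(y))=\infty$. A set is of first category if its complement contains a dense $G_\delta$ subset. *)

theory Defs
  imports "HOL-Analysis.Analysis"
begin

definition strongly_mixing :: "('a::topological_space \<Rightarrow> 'a) \<Rightarrow> bool" where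
  "strongly_mixing f \<longleftrightarrow>
     (\<forall>U V. open U \<and> U \<noteq> {} \<and> open V \<and> V \<noteq> {} \<longrightarrow>
        (\<exists>N. \<forall>n\<ge>N. U \<inter> (f ^^ n) -` V \<noteq> {}))"

definition uniformly_li_yorke_scrambled :: "('a::metric_space \<Rightarrow> 'a) \<Rightarrow> 'a set \<Rightarrow> bool" where
  "uniformly_li_yorke_scrambled f S \<longleftrightarrow>
     (\<exists>x\<in>S. \<exists>y\<in>S. x \<noteq> y) \<and>
     (\<exists>p q :: nat \<Rightarrow> nat.
        \<forall>x\<in>S. \<forall>y\<in>S. x \<noteq> y \<longrightarrow>
          ((\<lambda>n. dist ((f ^^ p n) x) ((f ^^ p n) y)) \<longlonglongrightarrow> 0) \<and>
          filterlim (\<lambda>n. dist ((f ^^ q n) x) ((f ^^ q n) y)) at_top sequentially)"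

definition first_category :: "'a::topological_space set \<Rightarrow> bool" where
  "first_category S \<longleftrightarrow>
     (\<exists>G. gdelta_in euclidean G \<and> closure G = UNIV \<and> G \<subseteq> - S)"

end

theory Submission
  imports Defs
begin

lemma cont_funpow:
  fixes f :: "'a::topological_space \<Rightarrow> 'a"
  assumes "continuous_on UNIV f"
  shows "continuous_on UNIV (f ^^ k)"
proof (induction k)
  case 0 have "f ^^ 0 = id" by auto then show ?case by (simp add: continuous_on_id)
next
  case (Suc k)
  have "continuous_on UNIV (f \<circ> (f ^^ k))"
    using continuous_on_compose[OF Suc] assms
    by (metis continuous_on_subset top_greatest)
  then show ?case by simp
qed

lemma p_unbounded:
  fixes f :: "'a::metric_space \<Rightarrow> 'a"
  assumes x: "x \<noteq> y"
    and p: "(\<lambda>n. dist ((f ^^ p n) x) ((f ^^ p n) y)) \<longlonglongrightarrow> 0"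
    and q: "filterlim (\<lambda>n. dist ((f ^^ q n) x) ((f ^^ q n) y)) at_top sequentially"
  shows "\<exists>n\<ge>N. p n \<ge> M"
proof (rule ccontr)
  assume "\<not> (\<exists>n\<ge>N. p n \<ge> M)"
  then have pM: "\<And>n. n \<ge> N \<Longrightarrow> p n < M" by (meson not_le)
  define d where "d k = dist ((f ^^ k) x) ((f ^^ k) y)" for k
  have "\<exists>k<M. d k = 0"
  proof (rule ccontr)
    assume "\<not> (\<exists>k<M. d k = 0)"
    then have pos: "\<And>k. k < M \<Longrightarrow> d k > 0" by (simp add: d_def)
    have ne: "M > 0" using pM[of N] by simp
    define e where "e = Min (d ` {..<M})"
    have e: "e > 0" unfolding e_def using pos ne by (subst Min_gr_iff) auto
    have "\<forall>\<^sub>F n in sequentially. d (p n) < e"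
      using order_tendstoD(2)[OF p e] unfolding d_def by simp
    then obtain L where L: "\<And>n. n \<ge> L \<Longrightarrow> d (p n) < e"
      unfolding eventually_sequentially by blast
    define n where "n = max L N"
    have "d (p n) < e" "n \<ge> N" using L[of n] by (auto simp: n_def)
    moreover have "e \<le> d (p n)" unfolding e_def using pM[OF \<open>n \<ge> N\<close>] by auto
    ultimately show False by simp
  qed
  then obtain k where k: "d k = 0" by blast
  have eq: "(f ^^ m) x = (f ^^ m) y" if "m \<ge> k" for m
  proof -
    have "(f ^^ k) x = (f ^^ k) y" using k by (simp add: d_def)
    then have "(f ^^ (m - k)) ((f ^^ k) x) = (f ^^ (m - k)) ((f ^^ k) y)" by simp
    moreover have "(f ^^ m) = (f ^^ (m - k)) \<circ> (f ^^ k)"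
      using that by (simp add: funpow_add[symmetric])
    ultimately show ?thesis by simp
  qed
  define B where "B = (\<Sum>j<k. d j)"
  have bnd: "d m \<le> B" for m
  proof (cases "m < k")
    case True
    then show ?thesis unfolding B_def
      by (intro member_le_sum) (auto simp: d_def)
  next
    case False
    then have "d m = 0" using eq[of m] by (simp add: d_def)
    moreover have "B \<ge> 0" unfolding B_def by (intro sum_nonneg) (simp add: d_def)
    ultimately show ?thesis by simp
  qed
  have "\<forall>\<^sub>F n in sequentially. d (q n) > B"
    using q unfolding d_def filterlim_at_top_dense by blast
  then obtain L where "\<And>n. n \<ge> L \<Longrightarrow> d (q n) > B" unfolding eventually_sequentially by blast
  then obtain n where "d (q n) > B" by blast
  with bnd show False by (meson not_le)
qed

theorem proposition2p8:
  fixes f :: "'a::polish_space \<Rightarrow> 'a" and S :: "'a set"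
  assumes "continuous_on UNIV f"
    and "strongly_mixing f"
    and "uniformly_li_yorke_scrambled f S"
  shows "first_category S"
proof -
  obtain x0 x1 where x0: "x0 \<in> S" and x1: "x1 \<in> S" and ne: "x0 \<noteq> x1"
    using assms(3) unfolding uniformly_li_yorke_scrambled_def by blast
  obtain p q :: "nat \<Rightarrow> nat" where pq: "\<And>x y. x \<in> S \<Longrightarrow> y \<in> S \<Longrightarrow> x \<noteq> y \<Longrightarrow>
      ((\<lambda>n. dist ((f ^^ p n) x) ((f ^^ p n) y)) \<longlonglongrightarrow> 0) \<and>
      filterlim (\<lambda>n. dist ((f ^^ q n) x) ((f ^^ q n) y)) at_top sequentially"
    using assms(3) unfolding uniformly_li_yorke_scrambled_def by blast
  define \<delta> where "\<delta> = dist x0 x1"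
  have \<delta>: "\<delta> > 0" using ne by (simp add: \<delta>_def)
  define Gs where "Gs N = (\<Union>n\<in>{N..}. {y. \<delta>/4 < dist ((f ^^ p n) y) ((f ^^ p n) x0)})" for N
  define G where "G = \<Inter> (range Gs)"
  have cont: "continuous_on UNIV (f ^^ k)" for k using cont_funpow[OF assms(1)] .
  have opn: "open (Gs N)" for N
  proof -
    have "open {y. \<delta>/4 < dist ((f ^^ p n) y) ((f ^^ p n) x0)}" for n
    proof -
      have c: "continuous_on UNIV (\<lambda>y. dist ((f ^^ p n) y) ((f ^^ p n) x0))"
        by (intro continuous_intros cont)
      have "{y. \<delta>/4 < dist ((f ^^ p n) y) ((f ^^ p n) x0)} = (\<lambda>y. dist ((f ^^ p n) y) ((f ^^ p n) x0)) -` {\<delta>/4<..}"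
        by auto
      then show ?thesis using open_vimage[OF _ c] by simp
    qed
    then show ?thesis unfolding Gs_def by blast
  qed
  have dense: "closure (Gs N) = UNIV" for N
  proof -
    have "z \<in> closure (Gs N)" for z
    proof (unfold closure_approachable, intro allI impI)
      fix e :: real assume e: "e > 0"
      define U where "U = ball z e"
      have U: "open U" "U \<noteq> {}" using e by (auto simp: U_def)
      have b: "open (ball x0 (\<delta>/5))" "ball x0 (\<delta>/5) \<noteq> {}" "open (ball x1 (\<delta>/5))" "ball x1 (\<delta>/5) \<noteq> {}"
        using \<delta> by auto
      obtain N1 where N1: "\<And>m. m \<ge> N1 \<Longrightarrow> U \<inter> (f ^^ m) -` ball x0 (\<delta>/5) \<noteq> {}"
        using assms(2) U b unfolding strongly_mixing_def by meson
      obtain N2 where N2: "\<And>m. m \<ge> N2 \<Longrightarrow> U \<inter> (f ^^ m) -` ball x1 (\<delta>/5) \<noteq> {}"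
        using assms(2) U b unfolding strongly_mixing_def by meson
      obtain n where n: "n \<ge> N" "p n \<ge> max N1 N2"
        using p_unbounded[OF ne] pq[OF x0 x1 ne] by blast
      obtain u1 where u1: "u1 \<in> U" "(f ^^ p n) u1 \<in> ball x0 (\<delta>/5)" using N1[of "p n"] n by auto
      obtain u2 where u2: "u2 \<in> U" "(f ^^ p n) u2 \<in> ball x1 (\<delta>/5)" using N2[of "p n"] n by auto
      let ?a = "(f ^^ p n) u1" and ?b = "(f ^^ p n) u2" and ?c = "(f ^^ p n) x0"
      have "\<delta> \<le> dist x0 ?a + dist ?a ?b + dist ?b x1" unfolding \<delta>_def
        using dist_triangle[of x0 x1 ?a] dist_triangle[of ?a x1 ?b] by linarith
      then have ab: "dist ?a ?b > 3 * \<delta> / 5" using u1 u2 by (simp add: dist_commute)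
      have "u1 \<in> Gs N \<or> u2 \<in> Gs N"
      proof (cases "\<delta>/4 < dist ?a ?c")
        case True then show ?thesis using n unfolding Gs_def by auto
      next
        case False
        have "dist ?a ?b \<le> dist ?a ?c + dist ?b ?c" using dist_triangle[of ?a ?b ?c] by (simp add: dist_commute)
        then have "\<delta>/4 < dist ?b ?c" using False ab \<delta> by linarith
        then show ?thesis using n unfolding Gs_def by auto
      qed
      then show "\<exists>y\<in>Gs N. dist y z < e" using u1 u2 by (auto simp: U_def dist_commute)
    qed
    then show ?thesis by auto
  qed
  have gd: "gdelta_in euclidean G" unfolding G_def
    by (intro gdelta_in_Inter open_imp_gdelta_in) (auto simp: opn)
  have cl: "closure G = UNIV"
  proof -
    have "euclidean closure_of \<Inter> (range Gs) = topspace euclidean"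
      by (rule Baire_category) (auto simp: completely_metrizable_space_euclidean opn dense euclidean_closure_of)
    then show ?thesis by (simp add: G_def euclidean_closure_of)
  qed
  have sub: "G \<subseteq> - S"
  proof
    fix y assume y: "y \<in> G"
    show "y \<in> - S"
    proof
      assume yS: "y \<in> S"
      show False
      proof (cases "y = x0")
        case True
        then show False using y \<delta> unfolding G_def Gs_def by auto
      next
        case False
        have "(\<lambda>n. dist ((f ^^ p n) y) ((f ^^ p n) x0)) \<longlonglongrightarrow> 0"
          using pq[OF yS x0 False] by blast
        then have "\<forall>\<^sub>F n in sequentially. dist ((f ^^ p n) y) ((f ^^ p n) x0) < \<delta>/4"
          by (rule order_tendstoD(2)) (use \<delta> in simp)
        then obtain N where N: "\<And>n. n \<ge> N \<Longrightarrow> dist ((f ^^ p n) y) ((f ^^ p n) x0) < \<delta>/4"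
          unfolding eventually_sequentially by blast
        have "y \<in> Gs N" using y unfolding G_def by blast
        then show False using N unfolding Gs_def by force
      qed
    qed
  qed
  show ?thesis unfolding first_category_def using gd cl sub by blast
qed

end
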